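(* Let $G$ be an acyclic ADT network with a multicast connection $\mathcal C=\{(S,T_1,\mathcal X(S)),\dots,(S,T_N,\mathcal X(S))\}$. Let $\mathcal F$ be the set of all link-failure patterns $f$ for which $(G_f,\mathcal C)$ is solvable. Then there is a single fixed (static) linear network code that solves $(G_f,\mathcal C)$ simultaneously for every $f\in\mathcal F$, i.e. it achieves the multicast rate whatever failure $f\in\mathcal F$ occurs. Such a code exists over $\mathbb F_q$ whenever $q>|\mathcal F|N$.
   Context: ADT network model. $G=(\mathcal V,\mathcal E)$ is a directed acyclic network of supernodes, each with input ports $I(V)$ and output ports $O(V)$. Edges go from output ports to input ports of other supernodes. Linear coding over a finite field $\mathbb F_q$: - An output port $e\in O(V)$ carries $Y(e)=\sum_{e'\in I(V)}\beta_{(e',e)}Y(e')$. At $S$, the term $\sum_k\alpha_{(k,e)}X(S,k)$ is added. - An output port sends the same symbol on all of its outgoing edges. - An input port $e'$ receives $Y(e')=\sum_{(e,e')\in\mathcal E}Y(e)$, the sum taken over $\mathbb F_q$. - A destination $T$ outputs $Z(T,k)=\sum_{e'\in I(T)}\epsilon_{(e',(T,k))}Y(e')$. A failure pattern $f$ is a set of links of $G$. $G_f$ is the network $G$ with those links deleted, which is equivalent to setting to zero the coding variables associated with the failed links. $(G_f,\mathcal C)$ is solvable if some coefficient choice makes every $T_i$ output exactly $\mathcal X(S)$ in $G_f$. A code solves $(G_f,\mathcal C)$ if, when used unchanged in $G_f$, every $T_i$ can recover $\mathcal X(S)$, i.e. each square system matrix from $\mathcal X(S)$ to $T_i$ in $G_f$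 is nonsingular. *)

theory Defs
  imports "HOL-Analysis.Determinants"
begin

text \<open>ADT network: supernodes V (type 'v), ports (type 'p); In v / Out v are the
input / output ports of supernode v; E is the set of links (output port, input port).
Source S, destinations T 0, ..., T (N-1).  Source symbols X(S,k) are indexed by
the finite type 'k (the multicast rate is CARD('k)).\<close>

definition node_graph ::
  "'v set \<Rightarrow> ('v \<Rightarrow> 'p set) \<Rightarrow> ('v \<Rightarrow> 'p set) \<Rightarrow> ('p \<times> 'p) set \<Rightarrow> ('v \<times> 'v) set" where
  "node_graph V In Out E =
     {(u, v). u \<in> V \<and> v \<in> V \<and> (\<exists>e e'. (e, e') \<in> E \<and> e \<in> Out u \<and> e' \<in> In v)}"

definition adt_network ::
  "'v set \<Rightarrow> ('v \<Rightarrow> 'p set) \<Rightarrow> ('v \<Rightarrow> 'p set) \<Rightarrow> ('p \<times> 'p) set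
   \<Rightarrow> 'v \<Rightarrow> (nat \<Rightarrow> 'v) \<Rightarrow> nat \<Rightarrow> bool" where
  "adt_network V In Out E S T N \<longleftrightarrow>
     finite V \<and>
     (\<forall>v\<in>V. finite (In v) \<and> finite (Out v)) \<and>
     (\<forall>u\<in>V. \<forall>v\<in>V. In u \<inter> Out v = {}) \<and>
     (\<forall>u\<in>V. \<forall>v\<in>V. u \<noteq> v \<longrightarrow> In u \<inter> In v = {} \<and> Out u \<inter> Out v = {}) \<and>
     E \<subseteq> {(e, e'). \<exists>u\<in>V. \<exists>v\<in>V. u \<noteq> v \<and> e \<in> Out u \<and> e' \<in> In v} \<and>
     acyclic (node_graph V In Out E) \<and>
     S \<in> V \<and> (\<forall>i<N. T i \<in> V \<and> T i \<noteq> S)"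

text \<open>A linear code over the field 'a: alpha k e = \<alpha>_(k,e), beta e' e = \<beta>_(e',e),
eps T e' k = \<epsilon>_(e',(T,k)).\<close>

record ('a, 'k, 'p, 'v) lcode =
  alpha :: "'k \<Rightarrow> 'p \<Rightarrow> 'a"
  beta  :: "'p \<Rightarrow> 'p \<Rightarrow> 'a"
  eps   :: "'v \<Rightarrow> 'p \<Rightarrow> 'k \<Rightarrow> 'a"

definition ports :: "'v set \<Rightarrow> ('v \<Rightarrow> 'p set) \<Rightarrow> ('v \<Rightarrow> 'p set) \<Rightarrow> 'p set" where
  "ports V In Out = (\<Union>v\<in>V. In v \<union> Out v)"

text \<open>The network equations for the code c in G_f (links in f deleted), with source
input X :: 'k \<Rightarrow> 'a.  Y is normalised to 0 outside the ports.\<close>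

definition adt_eqs ::
  "'v set \<Rightarrow> ('v \<Rightarrow> 'p set) \<Rightarrow> ('v \<Rightarrow> 'p set) \<Rightarrow> ('p \<times> 'p) set \<Rightarrow> 'v
   \<Rightarrow> ('a::field, 'k::finite, 'p, 'v) lcode \<Rightarrow> ('p \<times> 'p) set \<Rightarrow> ('k \<Rightarrow> 'a) \<Rightarrow> ('p \<Rightarrow> 'a) \<Rightarrow> bool" where
  "adt_eqs V In Out E S c f X Y \<longleftrightarrow>
     (\<forall>v\<in>V. \<forall>e\<in>Out v.
        Y e = (\<Sum>e'\<in>In v. beta c e' e * Y e')
              + (if v = S then (\<Sum>k\<in>UNIV. alpha c k e * X k) else 0)) \<and>
     (\<forall>v\<in>V. \<forall>e'\<in>In v. Y e' = (\<Sum>e\<in>{e. (e, e') \<in> E - f}. Y e)) \<and>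
     (\<forall>e. e \<notin> ports V In Out \<longrightarrow> Y e = 0)"

definition adt_Y where
  "adt_Y V In Out E S c f X = (THE Y. adt_eqs V In Out E S c f X Y)"

definition adt_Z where
  "adt_Z V In Out E S c f X T k =
     (\<Sum>e'\<in>In T. eps c T e' k * adt_Y V In Out E S c f X e')"

text \<open>Square system matrix from X(S) to destination T in G_f (entry (k',k) is the
gain from X(S,k) to Z(T,k')).\<close>
definition system_matrix ::
  "'v set \<Rightarrow> ('v \<Rightarrow> 'p set) \<Rightarrow> ('v \<Rightarrow> 'p set) \<Rightarrow> ('p \<times> 'p) set \<Rightarrow> 'v
   \<Rightarrow> ('a::field, 'k::finite, 'p, 'v) lcode \<Rightarrow> ('p \<times> 'p) set \<Rightarrow> 'v \<Rightarrow> 'a ^ 'k ^ 'k" where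
  "system_matrix V In Out E S c f T =
     (\<chi> k' k. adt_Z V In Out E S c f (\<lambda>j. if j = k then 1 else 0) T k')"

definition solvable ::
  "'v set \<Rightarrow> ('v \<Rightarrow> 'p set) \<Rightarrow> ('v \<Rightarrow> 'p set) \<Rightarrow> ('p \<times> 'p) set \<Rightarrow> 'v
   \<Rightarrow> (nat \<Rightarrow> 'v) \<Rightarrow> nat \<Rightarrow> ('p \<times> 'p) set \<Rightarrow> ('a::field) itself \<Rightarrow> ('k::finite) itself \<Rightarrow> bool" where
  "solvable V In Out E S T N f _ _ \<longleftrightarrow>
     (\<exists>c :: ('a, 'k, 'p, 'v) lcode. \<forall>i<N. \<forall>X. \<forall>k.
        adt_Z V In Out E S c f X (T i) k = X k)"

definition code_solves ::
  "'v set \<Rightarrow> ('v \<Rightarrow> 'p set) \<Rightarrow> ('v \<Rightarrow> 'p set) \<Rightarrow> ('p \<times> 'p) set \<Rightarrow> 'v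
   \<Rightarrow> (nat \<Rightarrow> 'v) \<Rightarrow> nat \<Rightarrow> ('a::field, 'k::finite, 'p, 'v) lcode \<Rightarrow> ('p \<times> 'p) set \<Rightarrow> bool" where
  "code_solves V In Out E S T N c f \<longleftrightarrow>
     (\<forall>i<N. det (system_matrix V In Out E S c f (T i)) \<noteq> 0)"

end

theory Submission
  imports Defs
begin


lemma det_r1_aux:
  fixes B :: "'a::comm_ring_1^'n^'n"
  assumes "finite R" "j0 \<notin> R" "row j0 B = v"
  shows "det (\<chi> i. if i \<in> R then row i B + (x * u i) *s v else row i B) = det B"
  using assms
proof (induction R rule: finite_induct)
  case empty
  have "(\<chi> i. if i \<in> {} then row i B + (x * u i) *s v else row i B) = B"
    by (vector row_def)
  then show ?case by simp
next
  case (insert i R)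
  let ?M = "(\<chi> i. if i \<in> R then row i B + (x * u i) *s v else row i B)"
  have ij: "i \<noteq> j0" using insert by auto
  have "(\<chi> k. if k \<in> insert i R then row k B + (x * u k) *s v else row k B)
      = (\<chi> k. if k = i then row i ?M + (x * u i) *s row j0 ?M else row k ?M)"
    using insert by (auto simp: vec_eq_iff row_def)
  also have "det \<dots> = det ?M" by (rule det_row_operation[OF ij])
  finally show ?case using insert by simp
qed

lemma det_r1_sum:
  fixes A :: "'a::comm_ring_1^'n^'n"
  assumes "finite R"
  shows "det (\<chi> i. if i \<in> R then row i A + (x * u i) *s v else row i A)
     = det A + x * (\<Sum>j\<in>R. u j * det (\<chi> i. if i = j then v else row i A))"
  using assms
proof (induction R rule: finite_induct)
  case empty
  have "(\<chi> i. if i \<in> {} then row i A + (x * u i) *s v else row i A) = A"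
    by (vector row_def)
  then show ?case by simp
next
  case (insert j R)
  let ?M = "(\<chi> i. if i \<in> R then row i A + (x * u i) *s v else row i A)"
  let ?B = "(\<chi> i. if i = j then v else row i A)"
  have e1: "(\<chi> i. if i \<in> insert j R then row i A + (x * u i) *s v else row i A)
     = (\<chi> i. if i = j then row j A + (x * u j) *s v else row i ?M)"
    using insert by (auto simp: vec_eq_iff row_def)
  have e2: "(\<chi> i. if i = j then row j A else row i ?M) = ?M"
    using insert by (auto simp: vec_eq_iff row_def)
  have e3: "(\<chi> i. if i = j then v else row i ?M)
      = (\<chi> i. if i \<in> R then row i ?B + (x * u i) *s v else row i ?B)"
    using insert by (auto simp: vec_eq_iff row_def)
  have e4: "det (\<chi> i. if i \<in> R then row i ?B + (x * u i) *s v else row i ?B) = det ?B"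
    by (rule det_r1_aux) (use insert in \<open>auto simp: row_def\<close>)
  have "det (\<chi> i. if i = j then row j A + (x * u j) *s v else row i ?M)
     = det (\<chi> i. if i = j then row j A else row i ?M)
       + det (\<chi> i. if i = j then (x * u j) *s v else row i ?M)"
    by (rule det_row_add)
  also have "det (\<chi> i. if i = j then (x * u j) *s v else row i ?M)
     = (x * u j) * det (\<chi> i. if i = j then v else row i ?M)"
    by (rule det_row_mul)
  finally show ?case using insert e1 e2 e3 e4 by (simp add: algebra_simps)
qed

lemma det_rank_one:
  fixes A :: "'a::comm_ring_1^'n^'n"
  shows "\<exists>K. \<forall>x. det (\<chi> a b. A$a$b + x * u a * v b) = det A + x * K"
proof -
  have "\<And>x. (\<chi> a b. A$a$b + x * u a * v b) =
      (\<chi> i. if i \<in> UNIV then row i A + (x * u i) *s (\<chi> b. v b) else row i A)"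
    by (auto simp: vec_eq_iff row_def algebra_simps)
  then show ?thesis using det_r1_sum[of UNIV A] by auto
qed



definition aff :: "(('i \<Rightarrow> 'a::field) \<Rightarrow> 'a) \<Rightarrow> 'i \<Rightarrow> bool" where
  "aff P i \<longleftrightarrow> (\<forall>g x. P (g(i:=x)) = P (g(i:=0)) + x * (P (g(i:=1)) - P (g(i:=0))))"

lemma nz_point:
  fixes P :: "'j \<Rightarrow> ('i \<Rightarrow> 'a::{finite,field}) \<Rightarrow> 'a"
  assumes "finite I" "finite J" "card J < CARD('a)"
    and "\<forall>j\<in>J. \<forall>i\<in>I. aff (P j) i"
    and "\<forall>j\<in>J. \<exists>g. (\<forall>i. i \<notin> I \<longrightarrow> g i = 0) \<and> P j g \<noteq> 0"
  shows "\<exists>g. (\<forall>i. i \<notin> I \<longrightarrow> g i = 0) \<and> (\<forall>j\<in>J. P j g \<noteq> 0)"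
  using assms(1,4,5)
proof (induction I arbitrary: P rule: finite_induct)
  case empty
  have "\<forall>j\<in>J. P j (\<lambda>_. 0) \<noteq> 0"
  proof
    fix j assume "j \<in> J"
    then obtain g where "\<forall>i. g i = 0" "P j g \<noteq> 0" using empty.prems(2) by auto
    moreover have "g = (\<lambda>_. 0)" using calculation(1) by auto
    ultimately show "P j (\<lambda>_. 0) \<noteq> 0" by simp
  qed
  then show ?case by auto
next
  case (insert i I)
  define a where "a j g = P j (g(i:=0))" for j g
  define b where "b j g = P j (g(i:=1)) - P j (g(i:=0))" for j g
  define C where "C j \<longleftrightarrow> (\<exists>g. (\<forall>i. i \<notin> I \<longrightarrow> g i = 0) \<and> b j g \<noteq> 0)" for j
  define P' where "P' j g = (if C j then b j g else a j g)" for j g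
  have affP: "P j (g(i:=x)) = a j g + x * b j g" if "j \<in> J" for j g x
  proof -
    have "aff (P j) i" using insert.prems(1) that by simp
    then show ?thesis unfolding a_def b_def aff_def by (rule allE) (erule allE)
  qed
  have "\<forall>j\<in>J. \<forall>i'\<in>I. aff (P' j) i'"
  proof (intro ballI)
    fix j i' assume j: "j \<in> J" and i': "i' \<in> I"
    have ii: "i' \<noteq> i" using i' insert.hyps by auto
    have A: "aff (P j) i'" using insert.prems(1) j i' by auto
    have tw: "\<And>g y z. g(i':=y, i:=z) = g(i:=z, i':=y)" using ii by (simp add: fun_upd_twist)
    have aa: "aff (a j) i'"
      unfolding aff_def a_def tw
    proof (intro allI)
      fix g x
      show "P j (g(i:=0, i':=x)) = P j (g(i:=0, i':=0)) + x * (P j (g(i:=0, i':=1)) - P j (g(i:=0, i':=0)))"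
        using A[unfolded aff_def, rule_format, of "g(i:=0)" x] by simp
    qed
    have ab: "aff (b j) i'"
      unfolding aff_def b_def tw
    proof (intro allI)
      fix g x
      have A1: "P j (g(i:=1, i':=x)) = P j (g(i:=1, i':=0)) + x * (P j (g(i:=1, i':=1)) - P j (g(i:=1, i':=0)))"
        using A[unfolded aff_def, rule_format, of "g(i:=1)" x] by simp
      have A0: "P j (g(i:=0, i':=x)) = P j (g(i:=0, i':=0)) + x * (P j (g(i:=0, i':=1)) - P j (g(i:=0, i':=0)))"
        using A[unfolded aff_def, rule_format, of "g(i:=0)" x] by simp
      show "P j (g(i:=1, i':=x)) - P j (g(i:=0, i':=x)) =
         P j (g(i:=1, i':=0)) - P j (g(i:=0, i':=0)) +
         x * (P j (g(i:=1, i':=1)) - P j (g(i:=0, i':=1)) - (P j (g(i:=1, i':=0)) - P j (g(i:=0, i':=0))))"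
        by (subst A1, subst A0) (simp add: algebra_simps)
    qed
    have "P' j = (if C j then b j else a j)" by (auto simp: P'_def fun_eq_iff)
    then show "aff (P' j) i'"
      using aa ab by (cases "C j") simp_all
  qed
  moreover have "\<forall>j\<in>J. \<exists>g. (\<forall>i. i \<notin> I \<longrightarrow> g i = 0) \<and> P' j g \<noteq> 0"
  proof
    fix j assume j: "j \<in> J"
    show "\<exists>g. (\<forall>i. i \<notin> I \<longrightarrow> g i = 0) \<and> P' j g \<noteq> 0"
    proof (cases "C j")
      case True
      then show ?thesis unfolding P'_def C_def by auto
    next
      case False
      obtain g where g: "\<forall>i'. i' \<notin> insert i I \<longrightarrow> g i' = 0" "P j g \<noteq> 0"
        using insert.prems(2) j by blast
      let ?g = "g(i:=0)"
      have sg: "\<forall>i'. i' \<notin> I \<longrightarrow> ?g i' = 0" using g by auto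
      have "b j ?g = 0" using False sg unfolding C_def by blast
      moreover have "b j ?g = b j g" unfolding b_def by simp
      moreover have "P j g = a j g + g i * b j g"
        using affP[OF j, of g "g i"] by simp
      ultimately have "a j ?g \<noteq> 0" using g(2) unfolding a_def by simp
      then have "(\<forall>i. i \<notin> I \<longrightarrow> ?g i = 0) \<and> P' j ?g \<noteq> 0" using sg False unfolding P'_def by simp
      then show ?thesis by blast
    qed
  qed
  ultimately obtain g where g: "\<forall>i'. i' \<notin> I \<longrightarrow> g i' = 0" "\<forall>j\<in>J. P' j g \<noteq> 0"
    using insert.IH by blast
  define Bad where "Bad = (\<Union>j\<in>J. {x. P j (g(i:=x)) = 0})"
  have sub: "card {x. P j (g(i:=x)) = 0} \<le> 1" if j: "j \<in> J" for j
  proof -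
    have "\<forall>x y. P j (g(i:=x)) = 0 \<longrightarrow> P j (g(i:=y)) = 0 \<longrightarrow> x = y"
    proof (intro allI impI)
      fix x y assume x: "P j (g(i:=x)) = 0" and y: "P j (g(i:=y)) = 0"
      show "x = y"
      proof (cases "C j")
        case True
        then have "b j g \<noteq> 0" using g(2) j unfolding P'_def by auto
        moreover have "a j g + x * b j g = a j g + y * b j g" using x y affP[OF j] by simp
        ultimately show ?thesis by simp
      next
        case False
        then have "b j g = 0" using g(1) unfolding C_def by blast
        moreover have "a j g \<noteq> 0" using g(2) j False unfolding P'_def by auto
        ultimately show ?thesis using x affP[OF j] by simp
      qed
    qed
    moreover have fin: "finite {x. P j (g(i:=x)) = 0}" by (rule finite_subset[OF subset_UNIV]) simp
    ultimately show ?thesis unfolding One_nat_def card_le_Suc0_iff_eq[OF fin] by blast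
  qed
  have "card Bad \<le> (\<Sum>j\<in>J. card {x. P j (g(i:=x)) = 0})"
    unfolding Bad_def by (rule card_UN_le[OF assms(2)])
  also have "\<dots> \<le> (\<Sum>j\<in>J. 1)" by (rule sum_mono) (use sub in auto)
  also have "\<dots> = card J" by simp
  finally have "card Bad < CARD('a)" using assms(3) by simp
  then have "Bad \<noteq> UNIV" by auto
  then obtain x where x: "x \<notin> Bad" by auto
  have "\<forall>j\<in>J. P j (g(i:=x)) \<noteq> 0" using x unfolding Bad_def by blast
  moreover have "\<forall>i'. i' \<notin> insert i I \<longrightarrow> (g(i:=x)) i' = 0" using g(1) by simp
  ultimately show ?case by blast
qed



datatype ('k, 'p, 'v) ix = IA 'k 'p | IB 'p 'p | IE 'v 'p 'k

definition code_of :: "(('k, 'p, 'v) ix \<Rightarrow> 'a) \<Rightarrow> ('a, 'k, 'p, 'v) lcode" where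
  "code_of g = \<lparr>alpha = (\<lambda>k p. g (IA k p)), beta = (\<lambda>p q. g (IB p q)), eps = (\<lambda>v p k. g (IE v p k))\<rparr>"

lemma ball2_cong:
  "(\<And>v e. v \<in> A \<Longrightarrow> e \<in> F v \<Longrightarrow> X v e = X' v e) \<Longrightarrow>
   (\<forall>v\<in>A. \<forall>e\<in>F v. Y e = X v e) = (\<forall>v\<in>A. \<forall>e\<in>F v. Y e = X' v e)"
  by auto

lemma sum_aff: fixes x :: "'a::comm_ring_1" shows "(\<Sum>e\<in>A. (a e + x * i e) * y e) = (\<Sum>e\<in>A. a e * y e) + x * (\<Sum>e\<in>A. i e * y e)"
  by (simp add: distrib_right sum.distrib sum_distrib_left mult.assoc)

lemma sum_aff2: fixes z :: "'a::comm_ring_1" shows "(\<Sum>e\<in>A. a e * (y e + z * r e)) = (\<Sum>e\<in>A. a e * y e) + z * (\<Sum>e\<in>A. a e * r e)"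
  by (simp add: distrib_left sum.distrib sum_distrib_left mult.left_commute)

lemma psubsetI_helper: "A \<subseteq> B \<Longrightarrow> x \<in> B \<Longrightarrow> x \<notin> A \<Longrightarrow> A \<subset> B"
  by blast

locale netw =
  fixes V :: "'v set" and In Out :: "'v \<Rightarrow> 'p set" and E :: "('p \<times> 'p) set" and S :: 'v
  assumes finV: "finite V"
    and finIO: "\<forall>v\<in>V. finite (In v) \<and> finite (Out v)"
    and dIO: "\<forall>u\<in>V. \<forall>v\<in>V. In u \<inter> Out v = {}"
    and dII: "\<forall>u\<in>V. \<forall>v\<in>V. u \<noteq> v \<longrightarrow> In u \<inter> In v = {} \<and> Out u \<inter> Out v = {}"
    and Esub: "E \<subseteq> {(e, e'). \<exists>u\<in>V. \<exists>v\<in>V. u \<noteq> v \<and> e \<in> Out u \<and> e' \<in> In v}"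
    and acyc: "acyclic (node_graph V In Out E)"
    and SV: "S \<in> V"
begin

lemma in_uniq: "u \<in> V \<Longrightarrow> v \<in> V \<Longrightarrow> e \<in> In u \<Longrightarrow> e \<in> In v \<Longrightarrow> u = v"
  using dII by blast
lemma out_uniq: "u \<in> V \<Longrightarrow> v \<in> V \<Longrightarrow> e \<in> Out u \<Longrightarrow> e \<in> Out v \<Longrightarrow> u = v"
  using dII by blast
lemma in_out: "u \<in> V \<Longrightarrow> v \<in> V \<Longrightarrow> e \<in> In u \<Longrightarrow> e \<in> Out v \<Longrightarrow> False"
  using dIO by blast

definition ht :: "'v \<Rightarrow> nat" where
  "ht v = card {u. (u, v) \<in> (node_graph V In Out E)\<^sup>+}"

lemma edge_src: "(e, e') \<in> E \<Longrightarrow> v \<in> V \<Longrightarrow> e' \<in> In v \<Longrightarrow> \<exists>u\<in>V. e \<in> Out u \<and> ht u < ht v"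
proof -
  assume a: "(e, e') \<in> E" "v \<in> V" "e' \<in> In v"
  have "(e, e') \<in> {(e, e'). \<exists>u\<in>V. \<exists>v\<in>V. u \<noteq> v \<and> e \<in> Out u \<and> e' \<in> In v}"
    using Esub a(1) by (rule subsetD)
  then have "\<exists>u\<in>V. \<exists>v\<in>V. u \<noteq> v \<and> e \<in> Out u \<and> e' \<in> In v" by simp
  then obtain u v' where uv: "u \<in> V" "v' \<in> V" "u \<noteq> v'" "e \<in> Out u" "e' \<in> In v'"
    by blast
  have vv: "v' = v" using in_uniq[OF uv(2) a(2) uv(5) a(3)] .
  let ?G = "node_graph V In Out E"
  have G: "(u, v) \<in> ?G" unfolding node_graph_def using uv(1,4) a vv by simp blast
  have GS: "?G \<subseteq> V \<times> V" unfolding node_graph_def by auto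
  have "?G\<^sup>+ \<subseteq> V \<times> V" using trancl_subset_Sigma[OF GS] .
  then have sub: "{w. (w, v) \<in> ?G\<^sup>+} \<subseteq> V" by auto
  have fin: "finite {w. (w, v) \<in> ?G\<^sup>+}" using finite_subset[OF sub finV] .
  have s1: "{w. (w, u) \<in> ?G\<^sup>+} \<subseteq> {w. (w, v) \<in> ?G\<^sup>+}"
  proof
    fix w assume "w \<in> {w. (w, u) \<in> ?G\<^sup>+}"
    then have "(w, u) \<in> ?G\<^sup>+" by simp
    then have "(w, v) \<in> ?G\<^sup>+" using G by (rule trancl_into_trancl)
    then show "w \<in> {w. (w, v) \<in> ?G\<^sup>+}" by simp
  qed
  have uin: "u \<in> {w. (w, v) \<in> ?G\<^sup>+}" using G by simp
  have unot: "u \<notin> {w. (w, u) \<in> ?G\<^sup>+}" using acyc unfolding acyclic_def by simp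
  have "{w. (w, u) \<in> ?G\<^sup>+} \<subset> {w. (w, v) \<in> ?G\<^sup>+}"
    using s1 uin unot by (rule psubsetI_helper)
  then have "card {w. (w, u) \<in> ?G\<^sup>+} < card {w. (w, v) \<in> ?G\<^sup>+}"
    by (rule psubset_card_mono[OF fin])
  then have "ht u < ht v" unfolding ht_def .
  then show ?thesis using uv(1,4) by blast
qed

definition gen_eqs :: "('p \<times> 'p) set \<Rightarrow> ('p \<Rightarrow> 'p \<Rightarrow> 'a::field) \<Rightarrow> ('p \<Rightarrow> 'a) \<Rightarrow> ('p \<Rightarrow> 'a) \<Rightarrow> bool" where
  "gen_eqs f B b Y \<longleftrightarrow>
     (\<forall>v\<in>V. \<forall>e\<in>Out v. Y e = (\<Sum>e'\<in>In v. B e' e * Y e') + b e) \<and>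
     (\<forall>v\<in>V. \<forall>e'\<in>In v. Y e' = (\<Sum>e\<in>{e. (e, e') \<in> E - f}. Y e)) \<and>
     (\<forall>e. e \<notin> ports V In Out \<longrightarrow> Y e = 0)"

lemma gen_lin:
  assumes "gen_eqs f B b1 Y1" "gen_eqs f B b2 Y2"
  shows "gen_eqs f B (\<lambda>e. b1 e + c * b2 e) (\<lambda>e. Y1 e + c * Y2 e)"
  unfolding gen_eqs_def
proof (intro conjI ballI allI impI)
  fix v e assume v: "v \<in> V" and e: "e \<in> Out v"
  have h1: "Y1 e = (\<Sum>e'\<in>In v. B e' e * Y1 e') + b1 e" using assms(1) v e unfolding gen_eqs_def by blast
  have h2: "Y2 e = (\<Sum>e'\<in>In v. B e' e * Y2 e') + b2 e" using assms(2) v e unfolding gen_eqs_def by blast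
  have s: "(\<Sum>e'\<in>In v. B e' e * (Y1 e' + c * Y2 e')) = (\<Sum>e'\<in>In v. B e' e * Y1 e') + c * (\<Sum>e'\<in>In v. B e' e * Y2 e')"
    by (simp add: distrib_left sum.distrib sum_distrib_left mult.left_commute)
  show "Y1 e + c * Y2 e = (\<Sum>e'\<in>In v. B e' e * (Y1 e' + c * Y2 e')) + (b1 e + c * b2 e)"
    unfolding s by (subst h1, subst h2) (simp add: algebra_simps)
next
  fix v e assume v: "v \<in> V" and e: "e \<in> In v"
  have h1: "Y1 e = (\<Sum>e\<in>{e'. (e', e) \<in> E - f}. Y1 e)" using assms(1) v e unfolding gen_eqs_def by blast
  have h2: "Y2 e = (\<Sum>e\<in>{e'. (e', e) \<in> E - f}. Y2 e)" using assms(2) v e unfolding gen_eqs_def by blast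
  show "Y1 e + c * Y2 e = (\<Sum>e\<in>{e'. (e', e) \<in> E - f}. Y1 e + c * Y2 e)"
    by (subst h1, subst h2) (simp add: sum.distrib sum_distrib_left)
next
  fix e assume "e \<notin> ports V In Out"
  then have "Y1 e = 0" "Y2 e = 0" using assms unfolding gen_eqs_def by blast+
  then show "Y1 e + c * Y2 e = 0" by simp
qed

lemma gen_in_zero:
  assumes "gen_eqs f B b Y" "v \<in> V" "e' \<in> In v"
    and "\<forall>u\<in>V. ht u < ht v \<longrightarrow> (\<forall>e\<in>Out u. Y e = 0)"
  shows "Y e' = 0"
proof -
  have "Y e' = (\<Sum>e\<in>{e. (e, e') \<in> E - f}. Y e)" using assms(1,2,3) unfolding gen_eqs_def by blast
  also have "\<dots> = 0"
  proof (rule sum.neutral, rule ballI)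
    fix e assume "e \<in> {e. (e, e') \<in> E - f}"
    then obtain u where "u \<in> V" "e \<in> Out u" "ht u < ht v" using edge_src assms(2,3) by blast
    then show "Y e = 0" using assms(4) by blast
  qed
  finally show ?thesis .
qed

lemma gen_vanish:
  assumes "gen_eqs f B b Y" "\<forall>w\<in>V. ht w < n \<longrightarrow> (\<forall>e\<in>Out w. b e = 0)"
  shows "v \<in> V \<Longrightarrow> ht v < n \<Longrightarrow> (\<forall>e\<in>In v. Y e = 0) \<and> (\<forall>e\<in>Out v. Y e = 0)"
proof (induction "ht v" arbitrary: v rule: less_induct)
  case less
  have outz: "\<forall>u\<in>V. ht u < ht v \<longrightarrow> (\<forall>e\<in>Out u. Y e = 0)"
  proof (rule ballI, rule impI)
    fix u assume "u \<in> V" "ht u < ht v"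
    then show "\<forall>e\<in>Out u. Y e = 0" using less.hyps[of u] less.prems(2) by simp
  qed
  have inz: "\<forall>e\<in>In v. Y e = 0"
    using gen_in_zero[OF assms(1) less.prems(1) _ outz] by blast
  have "\<forall>e\<in>Out v. Y e = 0"
  proof
    fix e assume e: "e \<in> Out v"
    have "Y e = (\<Sum>e'\<in>In v. B e' e * Y e') + b e" using assms(1) less.prems(1) e unfolding gen_eqs_def by blast
    moreover have "b e = 0" using assms(2) less.prems e by blast
    ultimately show "Y e = 0" using inz by simp
  qed
  then show ?case using inz by blast
qed

lemma gen_uniq:
  assumes "gen_eqs f B b Y" "gen_eqs f B b Y'"
  shows "Y = Y'"
proof -
  have g: "gen_eqs f B (\<lambda>e. b e + (-1) * b e) (\<lambda>e. Y e + (-1) * Y' e)"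
    by (rule gen_lin[OF assms])
  have z: "(\<forall>e\<in>In v. Y e + (-1) * Y' e = 0) \<and> (\<forall>e\<in>Out v. Y e + (-1) * Y' e = 0)" if "v \<in> V" for v
    by (rule gen_vanish[OF g, of "Suc (ht v)"]) (use that in auto)
  show ?thesis
  proof
    fix e
    show "Y e = Y' e"
    proof (cases "e \<in> ports V In Out")
      case True
      then obtain v where "v \<in> V" "e \<in> In v \<or> e \<in> Out v" unfolding ports_def by blast
      then have "Y e + (-1) * Y' e = 0" using z[of v] by blast
      then show ?thesis by simp
    next
      case False
      have "Y e = 0" "Y' e = 0" using False assms unfolding gen_eqs_def by blast+
      then show ?thesis by simp
    qed
  qed
qed


definition nout :: "'p \<Rightarrow> 'v" where "nout e = (THE v. v \<in> V \<and> e \<in> Out v)"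

lemma nout_eq: "v \<in> V \<Longrightarrow> e \<in> Out v \<Longrightarrow> nout e = v"
  unfolding nout_def using out_uniq by blast

definition part :: "nat \<Rightarrow> ('p \<times> 'p) set \<Rightarrow> ('p \<Rightarrow> 'p \<Rightarrow> 'a::field) \<Rightarrow> ('p \<Rightarrow> 'a) \<Rightarrow> ('p \<Rightarrow> 'a) \<Rightarrow> bool" where
  "part n f B b Y \<longleftrightarrow>
     (\<forall>v\<in>V. ht v < n \<longrightarrow> (\<forall>e\<in>Out v. Y e = (\<Sum>e'\<in>In v. B e' e * Y e') + b e) \<and>
        (\<forall>e'\<in>In v. Y e' = (\<Sum>e\<in>{e. (e, e') \<in> E - f}. Y e))) \<and>
     (\<forall>e. e \<notin> ports V In Out \<longrightarrow> Y e = 0)"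

lemma part_step:
  assumes P: "part n f B b Y"
  shows "\<exists>Y'. part (Suc n) f B b Y'"
proof -
  define Y1 where "Y1 e = (if (\<exists>v\<in>V. ht v = n \<and> e \<in> In v) then (\<Sum>e0\<in>{e0. (e0, e) \<in> E - f}. Y e0) else Y e)" for e
  define Y2 where "Y2 e = (if (\<exists>v\<in>V. ht v = n \<and> e \<in> Out v) then (\<Sum>e'\<in>In (nout e). B e' e * Y1 e') + b e else Y1 e)" for e
  have F1: "Y1 e = Y e" if "u \<in> V" "e \<in> Out u" for u e
  proof -
    have "\<not> (\<exists>v\<in>V. ht v = n \<and> e \<in> In v)" using in_out that by blast
    then show ?thesis unfolding Y1_def by (rule if_not_P)
  qed
  have F2: "Y2 e = Y e" if "u \<in> V" "e \<in> Out u" "ht u \<noteq> n" for u e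
  proof -
    have "\<not> (\<exists>v\<in>V. ht v = n \<and> e \<in> Out v)" using out_uniq that by blast
    then have "Y2 e = Y1 e" unfolding Y2_def by (rule if_not_P)
    then show ?thesis using F1[OF that(1,2)] by simp
  qed
  have F3: "Y2 e = Y1 e" if "u \<in> V" "e \<in> In u" for u e
  proof -
    have "\<not> (\<exists>v\<in>V. ht v = n \<and> e \<in> Out v)" using in_out that by blast
    then show ?thesis unfolding Y2_def by (rule if_not_P)
  qed
  have F3': "Y1 e = Y e" if "u \<in> V" "e \<in> In u" "ht u \<noteq> n" for u e
  proof -
    have "\<not> (\<exists>v\<in>V. ht v = n \<and> e \<in> In v)" using in_uniq that by blast
    then show ?thesis unfolding Y1_def by (rule if_not_P)
  qed
  have inc: "(\<Sum>e\<in>{e. (e, e') \<in> E - f}. Y2 e) = (\<Sum>e\<in>{e. (e, e') \<in> E - f}. Y e)"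
    if vv: "v \<in> V" "e' \<in> In v" "ht v \<le> n" for v e'
  proof (rule sum.cong[OF refl])
    fix e assume "e \<in> {e. (e, e') \<in> E - f}"
    then have "(e, e') \<in> E" by simp
    then obtain u where "u \<in> V" "e \<in> Out u" "ht u < ht v" using edge_src vv(1,2) by blast
    then show "Y2 e = Y e" using F2 vv(3) by simp
  qed
  have "part (Suc n) f B b Y2"
    unfolding part_def
  proof (intro conjI)
   show "\<forall>v\<in>V. ht v < Suc n \<longrightarrow> (\<forall>e\<in>Out v. Y2 e = (\<Sum>e'\<in>In v. B e' e * Y2 e') + b e) \<and>
        (\<forall>e'\<in>In v. Y2 e' = (\<Sum>e\<in>{e. (e, e') \<in> E - f}. Y2 e))"
   proof (rule ballI, rule impI)
    fix v assume v: "v \<in> V" "ht v < Suc n"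
    have A: "\<forall>e\<in>Out v. Y2 e = (\<Sum>e'\<in>In v. B e' e * Y2 e') + b e"
    proof
      fix e assume e: "e \<in> Out v"
      show "Y2 e = (\<Sum>e'\<in>In v. B e' e * Y2 e') + b e"
      proof (cases "ht v = n")
        case True
        have "Y2 e = (\<Sum>e'\<in>In (nout e). B e' e * Y1 e') + b e"
          unfolding Y2_def using v e True by auto
        also have "\<dots> = (\<Sum>e'\<in>In v. B e' e * Y2 e') + b e"
          unfolding nout_eq[OF v(1) e] using F3 v(1) by simp
        finally show ?thesis .
      next
        case False
        then have lt: "ht v < n" using v by simp
        have "Y e = (\<Sum>e'\<in>In v. B e' e * Y e') + b e" using P v(1) lt e unfolding part_def by blast
        moreover have "Y2 e = Y e" using F2 v(1) e False by blast
        moreover have "(\<Sum>e'\<in>In v. B e' e * Y e') = (\<Sum>e'\<in>In v. B e' e * Y2 e')"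
          using F3 F3' v(1) False by simp
        ultimately show ?thesis by simp
      qed
    qed
    have B: "\<forall>e'\<in>In v. Y2 e' = (\<Sum>e\<in>{e. (e, e') \<in> E - f}. Y2 e)"
    proof
      fix e' assume e': "e' \<in> In v"
      have le: "ht v \<le> n" using v by simp
      show "Y2 e' = (\<Sum>e\<in>{e. (e, e') \<in> E - f}. Y2 e)"
      proof (cases "ht v = n")
        case True
        have "Y2 e' = (\<Sum>e0\<in>{e0. (e0, e') \<in> E - f}. Y e0)"
          unfolding F3[OF v(1) e'] unfolding Y1_def using v e' True by auto
        then show ?thesis using inc[OF v(1) e' le] by simp
      next
        case False
        then have lt: "ht v < n" using v by simp
        have "Y e' = (\<Sum>e\<in>{e. (e, e') \<in> E - f}. Y e)" using P v(1) lt e' unfolding part_def by blast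
        moreover have "Y2 e' = Y e'" using F3[OF v(1) e'] F3'[OF v(1) e' False] by simp
        ultimately show ?thesis using inc[OF v(1) e' le] by simp
      qed
    qed
    show "(\<forall>e\<in>Out v. Y2 e = (\<Sum>e'\<in>In v. B e' e * Y2 e') + b e) \<and>
        (\<forall>e'\<in>In v. Y2 e' = (\<Sum>e\<in>{e. (e, e') \<in> E - f}. Y2 e))" using A B by (rule conjI)
   qed
  next
   show "\<forall>e. e \<notin> ports V In Out \<longrightarrow> Y2 e = 0"
   proof (rule allI, rule impI)
    fix e assume e: "e \<notin> ports V In Out"
    then have n1: "\<not> (\<exists>v\<in>V. ht v = n \<and> e \<in> Out v)" "\<not> (\<exists>v\<in>V. ht v = n \<and> e \<in> In v)"
      unfolding ports_def by blast+
    have "Y e = 0" using P e unfolding part_def by blast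
    have "Y1 e = Y e" unfolding Y1_def using n1(2) by (rule if_not_P)
    moreover have "Y2 e = Y1 e" unfolding Y2_def using n1(1) by (rule if_not_P)
    ultimately show "Y2 e = 0" using \<open>Y e = 0\<close> by simp
   qed
  qed
  then show ?thesis by blast
qed

lemma part_ex: "\<exists>Y. part n f B b Y"
proof (induction n)
  case 0
  have "part 0 f B b (\<lambda>_. 0)" unfolding part_def by simp
  then show ?case by blast
next
  case (Suc n)
  then show ?case using part_step by blast
qed

lemma gen_ex: "\<exists>Y. gen_eqs f B b Y"
proof -
  define n where "n = Suc (Max (ht ` V))"
  have lt: "ht v < n" if "v \<in> V" for v
    unfolding n_def using finV that by (simp add: le_imp_less_Suc)
  obtain Y where Y: "part n f B b Y" using part_ex by blast
  have "gen_eqs f B b Y"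
    unfolding gen_eqs_def
  proof (intro conjI)
    show "\<forall>v\<in>V. \<forall>e\<in>Out v. Y e = (\<Sum>e'\<in>In v. B e' e * Y e') + b e"
      using Y lt unfolding part_def by blast
    show "\<forall>v\<in>V. \<forall>e'\<in>In v. Y e' = (\<Sum>e\<in>{e. (e, e') \<in> E - f}. Y e)"
      using Y lt unfolding part_def by blast
    show "\<forall>e. e \<notin> ports V In Out \<longrightarrow> Y e = 0"
      using Y unfolding part_def by blast
  qed
  then show ?thesis by blast
qed

definition sol :: "('p \<times> 'p) set \<Rightarrow> ('p \<Rightarrow> 'p \<Rightarrow> 'a::field) \<Rightarrow> ('p \<Rightarrow> 'a) \<Rightarrow> ('p \<Rightarrow> 'a)" where
  "sol f B b = (THE Y. gen_eqs f B b Y)"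

lemma sol: "gen_eqs f B b (sol f B b)"
  unfolding sol_def using gen_ex gen_uniq by (metis theI)

lemma sol_eq: "gen_eqs f B b Y \<Longrightarrow> sol f B b = Y"
  using sol gen_uniq by blast


lemma gen_cong1:
  assumes H: "\<And>v e. v \<in> V \<Longrightarrow> e \<in> Out v \<Longrightarrow>
      (\<Sum>e'\<in>In v. B e' e * Y e') + b e = (\<Sum>e'\<in>In v. B' e' e * Y e') + b' e"
    and g: "gen_eqs f B b Y"
  shows "gen_eqs f B' b' Y"
  unfolding gen_eqs_def
proof (intro conjI)
  show "\<forall>v\<in>V. \<forall>e\<in>Out v. Y e = (\<Sum>e'\<in>In v. B' e' e * Y e') + b' e"
  proof (intro ballI)
    fix v e assume v: "v \<in> V" and e: "e \<in> Out v"
    have "Y e = (\<Sum>e'\<in>In v. B e' e * Y e') + b e" using g v e unfolding gen_eqs_def by blast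
    then show "Y e = (\<Sum>e'\<in>In v. B' e' e * Y e') + b' e" using H[OF v e] by (rule trans)
  qed
  show "\<forall>v\<in>V. \<forall>e'\<in>In v. Y e' = (\<Sum>e\<in>{e. (e, e') \<in> E - f}. Y e)"
    using g unfolding gen_eqs_def by blast
  show "\<forall>e. e \<notin> ports V In Out \<longrightarrow> Y e = 0"
    using g unfolding gen_eqs_def by blast
qed

lemma gen_cong:
  assumes "\<forall>v\<in>V. \<forall>p\<in>In v. \<forall>q\<in>Out v. B p q = B' p q"
    and "\<forall>v\<in>V. \<forall>e\<in>Out v. b e = b' e"
  shows "gen_eqs f B b Y = gen_eqs f B' b' Y"
proof -
  have H: "(\<Sum>e'\<in>In v. B e' e * Y e') + b e = (\<Sum>e'\<in>In v. B' e' e * Y e') + b' e"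
    if "v \<in> V" "e \<in> Out v" for v e
  proof -
    have "(\<Sum>e'\<in>In v. B e' e * Y e') = (\<Sum>e'\<in>In v. B' e' e * Y e')"
      by (rule sum.cong[OF refl]) (use assms(1) that in simp)
    moreover have "b e = b' e" using assms(2) that by blast
    ultimately show ?thesis by simp
  qed
  show ?thesis
  proof
    assume a: "gen_eqs f B b Y" show "gen_eqs f B' b' Y" by (rule gen_cong1[where B=B and b=b], rule H, assumption+, rule a)
  next
    assume a: "gen_eqs f B' b' Y" show "gen_eqs f B b Y" by (rule gen_cong1[where B=B' and b=b'], rule H[symmetric], assumption+, rule a)
  qed
qed

lemma gen_pert:
  assumes v: "v \<in> V" "p \<in> In v" "q \<in> Out v"
    and Y0: "gen_eqs f B b Y0" and R: "gen_eqs f B (\<lambda>e. if e = q then 1 else 0) R"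
  shows "gen_eqs f (\<lambda>p' q'. B p' q' + x * (if p' = p \<and> q' = q then 1 else 0)) b
           (\<lambda>e. Y0 e + (x * Y0 p) * R e)"
proof -
  have outz: "\<forall>u\<in>V. ht u < ht v \<longrightarrow> (\<forall>e\<in>Out u. R e = 0)"
  proof (rule ballI, rule impI)
    fix u assume u: "u \<in> V" "ht u < ht v"
    have hyp: "\<forall>w\<in>V. ht w < ht v \<longrightarrow> (\<forall>e\<in>Out w. (if e = q then 1 else 0) = (0::'a))"
    proof (rule ballI, rule impI, rule ballI)
      fix w e assume w: "w \<in> V" "ht w < ht v" and e: "e \<in> Out w"
      show "(if e = q then 1 else 0) = (0::'a)"
      proof (cases "e = q")
        case True
        then have "w = v" using out_uniq[OF w(1) v(1) e] v(3) by simp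
        then show ?thesis using w(2) by simp
      qed simp
    qed
    show "\<forall>e\<in>Out u. R e = 0" using gen_vanish[OF R hyp u] by blast
  qed
  have Rp: "R p = 0" by (rule gen_in_zero[OF R v(1) v(2) outz])
  define s where "s = Y0 p"
  define Yn where "Yn e = Y0 e + (x * Y0 p) * R e" for e
  have Ynp: "Yn p = s" unfolding Yn_def s_def Rp by simp
  have L: "gen_eqs f B (\<lambda>e. b e + (x * Y0 p) * (if e = q then 1 else 0)) Yn"
    unfolding Yn_def by (rule gen_lin[OF Y0 R])
  show ?thesis
    unfolding Yn_def[symmetric] gen_eqs_def
  proof (intro conjI)
    show "\<forall>w\<in>V. \<forall>e\<in>Out w. Yn e = (\<Sum>e'\<in>In w. (B e' e + x * (if e' = p \<and> e = q then 1 else 0)) * Yn e') + b e"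
    proof (intro ballI)
      fix w e assume w: "w \<in> V" and e: "e \<in> Out w"
      have h: "Yn e = (\<Sum>e'\<in>In w. B e' e * Yn e') + (b e + (x * Y0 p) * (if e = q then 1 else 0))"
        using L w e unfolding gen_eqs_def by blast
      have S1: "(\<Sum>e'\<in>In w. (B e' e + x * (if e' = p \<and> e = q then 1 else 0)) * Yn e')
          = (\<Sum>e'\<in>In w. B e' e * Yn e') + x * (\<Sum>e'\<in>In w. (if e' = p \<and> e = q then 1 else 0) * Yn e')"
        by (simp add: distrib_right sum.distrib sum_distrib_left mult.assoc)
      have S2: "(\<Sum>e'\<in>In w. (if e' = p \<and> e = q then 1 else 0) * Yn e') = (if e = q then s else 0)"
      proof (cases "e = q")
        case True
        then have "w = v" using out_uniq[OF w(1) v(1) e] v(3) by simp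
        have "(\<Sum>e'\<in>In w. (if e' = p \<and> e = q then 1 else 0) * Yn e') = (\<Sum>e'\<in>In v. (if e' = p then Yn e' else 0))"
          using True \<open>w = v\<close> by (intro sum.cong) auto
        also have "\<dots> = Yn p" using v(1,2) finIO by (simp add: sum.delta)
        finally show ?thesis using True Ynp by simp
      qed simp
      show "Yn e = (\<Sum>e'\<in>In w. (B e' e + x * (if e' = p \<and> e = q then 1 else 0)) * Yn e') + b e"
        unfolding S1 S2 h s_def by (simp add: algebra_simps)
    qed
    show "\<forall>v\<in>V. \<forall>e'\<in>In v. Yn e' = (\<Sum>e\<in>{e. (e, e') \<in> E - f}. Yn e)"
      using L unfolding gen_eqs_def by blast
    show "\<forall>e. e \<notin> ports V In Out \<longrightarrow> Yn e = 0"
      using L unfolding gen_eqs_def by blast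
  qed
qed


definition src :: "('a::field, 'k::finite, 'p, 'v) lcode \<Rightarrow> 'k \<Rightarrow> 'p \<Rightarrow> 'a" where
  "src c k e = (if e \<in> Out S then alpha c k e else 0)"

lemma adt_gen_eqs: "adt_eqs V In Out E S c f X Y = gen_eqs f (beta c) (\<lambda>e. if e \<in> Out S then (\<Sum>k\<in>UNIV. alpha c k e * X k) else 0) Y"
proof -
  have "(\<forall>v\<in>V. \<forall>e\<in>Out v. Y e = (\<Sum>e'\<in>In v. beta c e' e * Y e') + (if v = S then (\<Sum>k\<in>UNIV. alpha c k e * X k) else 0))
    = (\<forall>v\<in>V. \<forall>e\<in>Out v. Y e = (\<Sum>e'\<in>In v. beta c e' e * Y e') + (if e \<in> Out S then (\<Sum>k\<in>UNIV. alpha c k e * X k) else 0))"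
  proof (rule ball2_cong)
    fix v e assume v: "v \<in> V" and e: "e \<in> Out v"
    have "(v = S) = (e \<in> Out S)" using out_uniq[OF v SV e] e by blast
    then show "(\<Sum>e'\<in>In v. beta c e' e * Y e') + (if v = S then (\<Sum>k\<in>UNIV. alpha c k e * X k) else 0) =
      (\<Sum>e'\<in>In v. beta c e' e * Y e') + (if e \<in> Out S then (\<Sum>k\<in>UNIV. alpha c k e * X k) else 0)" by simp
  qed
  then show ?thesis unfolding adt_eqs_def gen_eqs_def by simp
qed

lemma adt_Y_sol: "adt_Y V In Out E S c f X = sol f (beta c) (\<lambda>e. if e \<in> Out S then (\<Sum>k\<in>UNIV. alpha c k e * X k) else 0)"
  unfolding adt_Y_def sol_def adt_gen_eqs ..

lemma Mform: "system_matrix V In Out E S c f t =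
   (\<chi> k' k. \<Sum>e'\<in>In t. eps c t e' k' * sol f (beta c) (src c k) e')"
proof -
  have "(\<lambda>e. if e \<in> Out S then (\<Sum>j\<in>UNIV. alpha c j e * (if j = k then 1 else 0)) else 0) = src c k" for k
    by (auto simp: src_def fun_eq_iff if_distrib cong: if_cong)
  then show ?thesis unfolding system_matrix_def adt_Z_def adt_Y_sol by simp
qed


end

context netw begin

lemma mat_aff:
  fixes g :: "('k::finite, 'p, 'v) ix \<Rightarrow> 'a::field"
  shows "\<exists>A u v. \<forall>x. system_matrix V In Out E S (code_of (g(\<iota>:=x))) f t = (\<chi> a b. A$a$b + x * u a * v b)"
proof -
  define c where "c x = (code_of (g(\<iota>:=x)) :: ('a, 'k, 'p, 'v) lcode)" for x
  have main: "\<exists>A u v. \<forall>x. system_matrix V In Out E S (c x) f t = (\<chi> a b. A$a$b + x * u a * v b)"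
  proof (cases \<iota>)
    case (IE t' p k0)
    define Y where "Y k = sol f (beta (c 0)) (src (c 0) k)" for k
    define A where "A = (\<chi> k' k. \<Sum>e'\<in>In t. eps (c 0) t e' k' * Y k e')"
    define u where "u a = (if a = k0 then 1 else (0::'a))" for a
    define v where "v b = (\<Sum>e'\<in>In t. (if t = t' \<and> e' = p then 1 else 0) * Y b e')" for b
    have "\<forall>x. system_matrix V In Out E S (c x) f t = (\<chi> a b. A$a$b + x * u a * v b)"
    proof
      fix x
      have be: "beta (c x) = beta (c 0)" unfolding c_def code_of_def IE by (simp add: fun_eq_iff)
      have al: "src (c x) = src (c 0)" unfolding c_def code_of_def IE src_def by (simp add: fun_eq_iff)
      have ep: "eps (c x) t e' k' = eps (c 0) t e' k' + x * (if t = t' \<and> e' = p \<and> k' = k0 then 1 else 0)" for e' k'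
        unfolding c_def code_of_def IE by simp
      show "system_matrix V In Out E S (c x) f t = (\<chi> a b. A$a$b + x * u a * v b)"
        unfolding Mform be al ep sum_aff
      proof (simp only: vec_eq_iff vec_lambda_beta, intro allI)
        fix a b
        show "(\<Sum>e'\<in>In t. eps (c 0) t e' a * sol f (beta (c 0)) (src (c 0) b) e') +
          x * (\<Sum>e'\<in>In t. (if t = t' \<and> e' = p \<and> a = k0 then 1 else 0) * sol f (beta (c 0)) (src (c 0) b) e') =
          A $ a $ b + x * u a * v b"
          unfolding A_def u_def v_def Y_def by (cases "a = k0") simp_all
      qed
    qed
    then show ?thesis by blast
  next
    case (IA k0 e0)
    define d where "d e = (if e \<in> Out S \<and> e = e0 then 1 else (0::'a))" for e
    define Y where "Y k = sol f (beta (c 0)) (src (c 0) k)" for k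
    define R where "R = sol f (beta (c 0)) d"
    define A where "A = (\<chi> k' k. \<Sum>e'\<in>In t. eps (c 0) t e' k' * Y k e')"
    define u where "u a = (\<Sum>e'\<in>In t. eps (c 0) t e' a * R e')" for a
    define v where "v b = (if b = k0 then 1 else (0::'a))" for b
    have "\<forall>x. system_matrix V In Out E S (c x) f t = (\<chi> a b. A$a$b + x * u a * v b)"
    proof
      fix x
      have be: "beta (c x) = beta (c 0)" unfolding c_def code_of_def IA by (simp add: fun_eq_iff)
      have ep: "eps (c x) = eps (c 0)" unfolding c_def code_of_def IA by (simp add: fun_eq_iff)
      have sr: "src (c x) k = (\<lambda>e. src (c 0) k e + (x * (if k = k0 then 1 else 0)) * d e)" for k
        unfolding c_def code_of_def IA src_def d_def by (auto simp: fun_eq_iff)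
      have so: "sol f (beta (c 0)) (src (c x) k) = (\<lambda>e. Y k e + (x * (if k = k0 then 1 else 0)) * R e)" for k
        unfolding sr Y_def R_def by (rule sol_eq, rule gen_lin, rule sol, rule sol)
      show "system_matrix V In Out E S (c x) f t = (\<chi> a b. A$a$b + x * u a * v b)"
        unfolding Mform be ep so sum_aff2 A_def u_def v_def
        by (simp add: vec_eq_iff)
    qed
    then show ?thesis by blast
  next
    case (IB p q)
    define Y where "Y k = sol f (beta (c 0)) (src (c 0) k)" for k
    have al: "src (c x) = src (c 0)" for x unfolding c_def code_of_def IB src_def by (simp add: fun_eq_iff)
    have ep: "eps (c x) = eps (c 0)" for x unfolding c_def code_of_def IB by (simp add: fun_eq_iff)
    have bx: "beta (c x) = (\<lambda>p' q'. beta (c 0) p' q' + x * (if p' = p \<and> q' = q then 1 else 0))" for x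
      unfolding c_def code_of_def IB by (simp add: fun_eq_iff)
    show ?thesis
    proof (cases "\<exists>w\<in>V. p \<in> In w \<and> q \<in> Out w")
      case True
      then obtain w where w: "w \<in> V" "p \<in> In w" "q \<in> Out w" by blast
      define R where "R = sol f (beta (c 0)) (\<lambda>e. if e = q then 1 else 0)"
      define A where "A = (\<chi> k' k. \<Sum>e'\<in>In t. eps (c 0) t e' k' * Y k e')"
      define u where "u a = (\<Sum>e'\<in>In t. eps (c 0) t e' a * R e')" for a
      define v where "v b = Y b p" for b
      have "\<forall>x. system_matrix V In Out E S (c x) f t = (\<chi> a b. A$a$b + x * u a * v b)"
      proof
        fix x
        have so: "sol f (beta (c x)) (src (c x) k) = (\<lambda>e. Y k e + (x * Y k p) * R e)" for k
          unfolding bx[of x] al[of x] Y_def R_def by (rule sol_eq, rule gen_pert[OF w], rule sol, rule sol)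
        show "system_matrix V In Out E S (c x) f t = (\<chi> a b. A$a$b + x * u a * v b)"
          unfolding Mform so ep[of x] sum_aff2 A_def u_def v_def
          by (simp add: vec_eq_iff mult.assoc mult.left_commute)
      qed
      then show ?thesis by blast
    next
      case False
      have H: "\<forall>x. system_matrix V In Out E S (c x) f t = (\<chi> a b. system_matrix V In Out E S (c 0) f t $a$b + x * 0 * 0)"
      proof
        fix x
        have so: "sol f (beta (c x)) b = sol f (beta (c 0)) b" for b
        proof -
          have "\<forall>v\<in>V. \<forall>p'\<in>In v. \<forall>q'\<in>Out v. beta (c x) p' q' = beta (c 0) p' q'"
            using False unfolding bx[of x] by auto
          then have "gen_eqs f (beta (c x)) b Y = gen_eqs f (beta (c 0)) b Y" for Y
            by (rule gen_cong) simp
          then have "gen_eqs f (beta (c x)) b = gen_eqs f (beta (c 0)) b" by (rule ext)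
          then show ?thesis unfolding sol_def by simp
        qed
        show "system_matrix V In Out E S (c x) f t = (\<chi> a b. system_matrix V In Out E S (c 0) f t $a$b + x * 0 * 0)"
          unfolding Mform so al[of x] ep[of x] by (simp add: vec_eq_iff)
      qed
      show ?thesis
        apply (rule exI[of _ "system_matrix V In Out E S (c 0) f t"])
        apply (rule exI[of _ "\<lambda>_. 0"])
        apply (rule exI[of _ "\<lambda>_. 0"])
        using H by simp
    qed
  qed
  then show ?thesis unfolding c_def .
qed

end


definition coord :: "('a, 'k, 'p, 'v) lcode \<Rightarrow> ('k, 'p, 'v) ix \<Rightarrow> 'a" where
  "coord c \<iota> = (case \<iota> of IA k p \<Rightarrow> alpha c k p | IB p q \<Rightarrow> beta c p q | IE v p k \<Rightarrow> eps c v p k)"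

context netw begin

lemma restrict:
  fixes c :: "('a::field, 'k::finite, 'p, 'v) lcode"
  assumes IA: "\<forall>k. \<forall>e\<in>Out S. IA k e \<in> I"
    and IB: "\<forall>v\<in>V. \<forall>p\<in>In v. \<forall>q\<in>Out v. IB p q \<in> I"
    and IE: "\<forall>e'\<in>In t. \<forall>k. IE t e' k \<in> I"
  shows "system_matrix V In Out E S (code_of (\<lambda>\<iota>. if \<iota> \<in> I then coord c \<iota> else 0)) f t
       = system_matrix V In Out E S c f t"
proof -
  define c' where "c' = (code_of (\<lambda>\<iota>. if \<iota> \<in> I then coord c \<iota> else 0) :: ('a, 'k, 'p, 'v) lcode)"
  have sr: "src c' k = src c k" for k
    unfolding c'_def src_def code_of_def coord_def using IA by (auto simp: fun_eq_iff)
  have so: "sol f (beta c') (src c k) = sol f (beta c) (src c k)" for k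
  proof -
    have "\<forall>v\<in>V. \<forall>p\<in>In v. \<forall>q\<in>Out v. beta c' p q = beta c p q"
      unfolding c'_def code_of_def coord_def using IB by auto
    then have "gen_eqs f (beta c') (src c k) Y = gen_eqs f (beta c) (src c k) Y" for Y
      by (rule gen_cong) simp
    then have "gen_eqs f (beta c') (src c k) = gen_eqs f (beta c) (src c k)" by (rule ext)
    then show ?thesis unfolding sol_def by simp
  qed
  have ep: "eps c' t e' k' = eps c t e' k'" if "e' \<in> In t" for e' k'
    unfolding c'_def code_of_def coord_def using IE that by auto
  have "system_matrix V In Out E S c' f t = system_matrix V In Out E S c f t"
    unfolding Mform sr so using ep by (simp add: vec_eq_iff)
  then show ?thesis unfolding c'_def .
qed

end

theorem theorem9:
  fixes V :: "'v set" and In Out :: "'v \<Rightarrow> 'p set" and E :: "('p \<times> 'p) set"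
    and S :: 'v and T :: "nat \<Rightarrow> 'v" and N :: nat
    and \<F> :: "('p \<times> 'p) set set"
  assumes "adt_network V In Out E S T N"
    and "\<F> = {f. f \<subseteq> E \<and> solvable V In Out E S T N f TYPE('a::{finite,field}) TYPE('k::finite)}"
    and "card \<F> * N < CARD('a)"
  shows "\<exists>c :: ('a, 'k, 'p, 'v) lcode. \<forall>f\<in>\<F>. code_solves V In Out E S T N c f"
proof -
  have net: "finite V" "\<forall>v\<in>V. finite (In v) \<and> finite (Out v)"
     "\<forall>u\<in>V. \<forall>v\<in>V. In u \<inter> Out v = {}"
     "\<forall>u\<in>V. \<forall>v\<in>V. u \<noteq> v \<longrightarrow> In u \<inter> In v = {} \<and> Out u \<inter> Out v = {}"
     "E \<subseteq> {(e, e'). \<exists>u\<in>V. \<exists>v\<in>V. u \<noteq> v \<and> e \<in> Out u \<and> e' \<in> In v}"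
     "acyclic (node_graph V In Out E)" "S \<in> V" "\<forall>i<N. T i \<in> V \<and> T i \<noteq> S"
    using assms(1) unfolding adt_network_def by blast+
  interpret netw V In Out E S
    by (unfold_locales; rule net)
  define I :: "('k, 'p, 'v) ix set" where "I = ((\<lambda>(k, e). IA k e) ` (UNIV \<times> Out S)
      \<union> (\<lambda>(p, q). IB p q) ` (\<Union>v\<in>V. In v \<times> Out v)
      \<union> (\<lambda>(i, e, k). IE (T i) e k) ` (SIGMA i:{..<N}. In (T i) \<times> UNIV))"
  have finI: "finite I"
    unfolding I_def using net(1,2,7,8) by (intro finite_UnI finite_imageI finite_SigmaI finite_cartesian_product finite_UN_I) auto
  have finE: "finite E"
  proof (rule finite_subset)
    show "E \<subseteq> (\<Union>v\<in>V. Out v) \<times> (\<Union>v\<in>V. In v)" using net(5) by blast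
    show "finite ((\<Union>v\<in>V. Out v) \<times> (\<Union>v\<in>V. In v))" using net(1,2) by auto
  qed
  have finF: "finite \<F>"
    by (rule finite_subset[of _ "Pow E"]) (use assms(2) finE in auto)
  define J where "J = \<F> \<times> {..<N}"
  have finJ: "finite J" unfolding J_def using finF by simp
  have cardJ: "card J < CARD('a)" unfolding J_def card_cartesian_product using assms(3) by simp
  define P where "P j g = det (system_matrix V In Out E S (code_of g :: ('a, 'k, 'p, 'v) lcode) (fst j) (T (snd j)))"
    for j and g :: "('k, 'p, 'v) ix \<Rightarrow> 'a"
  have aff: "\<forall>j\<in>J. \<forall>i\<in>I. aff (P j) i"
  proof (intro ballI)
    fix j i
    show "aff (P j) i" unfolding aff_def
    proof (intro allI)
      fix g :: "('k, 'p, 'v) ix \<Rightarrow> 'a" and x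
      obtain A u v where Auv: "\<forall>x. system_matrix V In Out E S (code_of (g(i:=x)) :: ('a, 'k, 'p, 'v) lcode) (fst j) (T (snd j)) = (\<chi> a b. A$a$b + x * u a * v b)"
        using mat_aff by blast
      obtain K where K: "\<forall>x. det (\<chi> a b. A$a$b + x * u a * v b) = det A + x * K"
        using det_rank_one by blast
      have Px: "P j (g(i:=y)) = det A + y * K" for y
        unfolding P_def using Auv K by simp
      show "P j (g(i:=x)) = P j (g(i:=0)) + x * (P j (g(i:=1)) - P j (g(i:=0)))"
        unfolding Px by simp
    qed
  qed
  have nz: "\<forall>j\<in>J. \<exists>g. (\<forall>i. i \<notin> I \<longrightarrow> g i = 0) \<and> P j g \<noteq> 0"
  proof
    fix j assume j: "j \<in> J"
    obtain f i where fi: "j = (f, i)" "f \<in> \<F>" "i < N" using j unfolding J_def by auto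
    have "solvable V In Out E S T N f TYPE('a) TYPE('k)" using fi(2) assms(2) by blast
    then obtain c :: "('a, 'k, 'p, 'v) lcode" where c: "\<forall>i<N. \<forall>X. \<forall>k. adt_Z V In Out E S c f X (T i) k = X k"
      unfolding solvable_def by blast
    define g where "g \<iota> = (if \<iota> \<in> I then coord c \<iota> else 0)" for \<iota>
    have TV: "T i \<in> V" using net(8) fi(3) by blast
    have "system_matrix V In Out E S (code_of g) f (T i) = system_matrix V In Out E S c f (T i)"
      unfolding g_def
    proof (rule restrict)
      show "\<forall>e'\<in>In (T i). \<forall>k. IE (T i) e' k \<in> I"
      proof (intro ballI allI)
        fix e' k assume e': "e' \<in> In (T i)"
        show "IE (T i) e' k \<in> I" unfolding I_def
          by (rule UnI2, rule rev_image_eqI[of "(i, e', k)"]) (use e' fi(3) in auto)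
      qed
    qed (auto simp: I_def)
    also have "\<dots> = mat 1"
      unfolding system_matrix_def using c fi(3) by (simp add: vec_eq_iff mat_def)
    finally have "P j g = 1" unfolding P_def fi(1) by simp
    moreover have "\<forall>\<iota>. \<iota> \<notin> I \<longrightarrow> g \<iota> = 0" unfolding g_def by simp
    ultimately show "\<exists>g. (\<forall>i. i \<notin> I \<longrightarrow> g i = 0) \<and> P j g \<noteq> 0" by auto
  qed
  obtain g where g: "\<forall>j\<in>J. P j g \<noteq> 0"
    using nz_point[OF finI finJ cardJ aff nz] by blast
  have "\<forall>f\<in>\<F>. code_solves V In Out E S T N (code_of g :: ('a, 'k, 'p, 'v) lcode) f"
    unfolding code_solves_def
  proof (intro ballI allI impI)
    fix f i assume "f \<in> \<F>" "i < N"
    then have "(f, i) \<in> J" unfolding J_def by simp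
    then show "det (system_matrix V In Out E S (code_of g :: ('a, 'k, 'p, 'v) lcode) f (T i)) \<noteq> 0"
      using g unfolding P_def by fastforce
  qed
  then show ?thesis by blast
qed

end
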